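(* In the setting of the context, if $D<a-3$ then the quadric fibration $\pi:\widetilde{X}_{(a,1,1);D}\to\mathbb{P}^1$ has generic corank $\geq1$.
   Context: Let $a,D\geq1$, masses $m_1^2,\dots,m_{a+2}^2>0$ and vectors $p,k_1,\dots,k_a\in\mathbb{C}^D$; set $r_i^2=(p+\sum_{j=1}^{i-1}k_j)^2$ and $q_{ij}^2=(\sum_{r=i}^{j-1}k_r)^2$ for $i<j$. On $\mathbb{P}^{a+1}$ with coordinates $y_1,\dots,y_a,x,z$, the graph hypersurface of type $(a,1,1)$ is $X_{(a,1,1);D}=V(\mathbf{F})$ with $\mathbf{U}=(z+x)\sum_iy_i+zx$, $\mathbf{V}=(z+x)\sum_{i<j}q_{ij}^2y_iy_j+zx\sum_jr_j^2y_j$, $\mathbf{F}=\mathbf{U}(\sum_im_i^2y_i+m_{a+1}^2x+m_{a+2}^2z)-\mathbf{V}$. $\widetilde{X}_{(a,1,1);D}$ is its strict transform in the blow-up of $\mathbb{P}^{a+1}$ along $V(x,z)$, i.e. the hypersurface in homogeneous coordinates $(y_1,\dots,y_a,x,z,w)$ (blow-down map $[y:xw:zw]$) given by $\widetilde{\mathbf{U}}(\sum_im_i^2y_i+m_{a+1}^2xw+m_{a+2}^2zw)-\widetilde{\mathbf{V}}$ with $\widetilde{\mathbf{U}}=(z+x)\sum_iy_i+zxw$, $\widetilde{\mathbf{V}}=(z+x)\sum_{i<j}q_{ij}^2y_iy_j+zxw\sum_jr_j^2y_j$. The map $\pi$ is $[x:z]$; each fibre is a quadric in $\mathbb{P}^a$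 (coordinates $y_1,\dots,y_a,w$), and the generic corank of $\pi$ is the corank of the fibre quadratic form at a general point of $\mathbb{P}^1$. *)

theory Defs
  imports Complex_Main "Jordan_Normal_Form.DL_Rank"
begin

text \<open>Vectors in C^D are functions nat => complex, components indexed by l < D.
 The square uses the complex bilinear (Minkowski-free, Euclidean) product v^2 = sum_l v_l^2.\<close>

definition sqC :: "nat \<Rightarrow> (nat \<Rightarrow> complex) \<Rightarrow> complex" where
  "sqC D v = (\<Sum>l<D. v l * v l)"

definition rsq :: "nat \<Rightarrow> (nat \<Rightarrow> complex) \<Rightarrow> (nat \<Rightarrow> nat \<Rightarrow> complex) \<Rightarrow> nat \<Rightarrow> complex" where
  "rsq D p k i = sqC D (\<lambda>l. p l + (\<Sum>j\<in>{1..<i}. k j l))"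

definition qsq :: "nat \<Rightarrow> (nat \<Rightarrow> nat \<Rightarrow> complex) \<Rightarrow> nat \<Rightarrow> nat \<Rightarrow> complex" where
  "qsq D k i j = sqC D (\<lambda>l. \<Sum>r\<in>{i..<j}. k r l)"

text \<open>The defining polynomial of the strict transform, in coordinates (y_1..y_a, x, z, w);
 msq i stands for m_i^2.\<close>
definition Ftilde :: "nat \<Rightarrow> nat \<Rightarrow> (nat \<Rightarrow> real) \<Rightarrow> (nat \<Rightarrow> complex) \<Rightarrow> (nat \<Rightarrow> nat \<Rightarrow> complex)
    \<Rightarrow> (nat \<Rightarrow> complex) \<Rightarrow> complex \<Rightarrow> complex \<Rightarrow> complex \<Rightarrow> complex" where
  "Ftilde a D msq p k y x z w =
     (let U = (z + x) * (\<Sum>i\<in>{1..a}. y i) + z * x * w;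
          V = (z + x) * (\<Sum>(i,j)\<in>{(i,j). 1 \<le> i \<and> i < j \<and> j \<le> a}. qsq D k i j * y i * y j)
              + z * x * w * (\<Sum>j\<in>{1..a}. rsq D p k j * y j);
          L = (\<Sum>i\<in>{1..a}. complex_of_real (msq i) * y i)
              + complex_of_real (msq (a+1)) * x * w + complex_of_real (msq (a+2)) * z * w
      in U * L - V)"

text \<open>Fibre quadratic form over the point [x:z] of P^1, as a function of a vector
 v indexed by 0..a, where v (i-1) = y_i (1 <= i <= a) and v a = w.\<close>
definition fibre_form :: "nat \<Rightarrow> nat \<Rightarrow> (nat \<Rightarrow> real) \<Rightarrow> (nat \<Rightarrow> complex) \<Rightarrow> (nat \<Rightarrow> nat \<Rightarrow> complex)
    \<Rightarrow> complex \<Rightarrow> complex \<Rightarrow> (nat \<Rightarrow> complex) \<Rightarrow> complex" where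
  "fibre_form a D msq p k x z v = Ftilde a D msq p k (\<lambda>i. v (i - 1)) x z (v a)"

definition unitv :: "nat \<Rightarrow> nat \<Rightarrow> complex" where
  "unitv i = (\<lambda>t. if t = i then 1 else 0)"

definition fibre_mat :: "nat \<Rightarrow> nat \<Rightarrow> (nat \<Rightarrow> real) \<Rightarrow> (nat \<Rightarrow> complex) \<Rightarrow> (nat \<Rightarrow> nat \<Rightarrow> complex)
    \<Rightarrow> complex \<Rightarrow> complex \<Rightarrow> complex mat" where
  "fibre_mat a D msq p k x z =
     mat (a+1) (a+1) (\<lambda>(i,j). (fibre_form a D msq p k x z (\<lambda>t. unitv i t + unitv j t)
        - fibre_form a D msq p k x z (unitv i) - fibre_form a D msq p k x z (unitv j)) / 2)"

definition fibre_corank :: "nat \<Rightarrow> nat \<Rightarrow> (nat \<Rightarrow> real) \<Rightarrow> (nat \<Rightarrow> complex) \<Rightarrow> (nat \<Rightarrow> nat \<Rightarrow> complex)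
    \<Rightarrow> complex \<Rightarrow> complex \<Rightarrow> nat" where
  "fibre_corank a D msq p k x z = (a + 1) - vec_space.rank (a+1) (fibre_mat a D msq p k x z)"

text \<open>Generic corank of pi: the corank at a general point of P^1. By lower semicontinuity
 of rank this is the minimum of the fibre corank over all points [x:z] of P^1.\<close>
definition generic_corank :: "nat \<Rightarrow> nat \<Rightarrow> (nat \<Rightarrow> real) \<Rightarrow> (nat \<Rightarrow> complex) \<Rightarrow> (nat \<Rightarrow> nat \<Rightarrow> complex) \<Rightarrow> nat" where
  "generic_corank a D msq p k =
     (LEAST c. \<exists>x z. (x, z) \<noteq> (0, 0) \<and> fibre_corank a D msq p k x z = c)"

end

theory Submission
  imports Defs
begin

lemma rank_sum_rank1:
  fixes f g :: "nat \<Rightarrow> nat \<Rightarrow> complex"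
  shows "vec_space.rank n (mat n n (\<lambda>(i,j). \<Sum>\<alpha><N. f \<alpha> i * g \<alpha> j)) \<le> N"
proof (induction N)
  case 0
  have "mat n n (\<lambda>(i,j). \<Sum>\<alpha><0. f \<alpha> i * g \<alpha> j) = (0\<^sub>m n n :: complex mat)"
    by (rule eq_matI) auto
  then show ?case using vec_space.rank_0I by (metis le_refl)
next
  case (Suc N)
  have e: "mat n n (\<lambda>(i,j). \<Sum>\<alpha><Suc N. f \<alpha> i * g \<alpha> j) =
     mat n n (\<lambda>(i,j). \<Sum>\<alpha><N. f \<alpha> i * g \<alpha> j) + mat n n (\<lambda>(i,j). f N i * g N j)"
    by (rule eq_matI) auto
  have r1: "vec_space.rank n (mat n n (\<lambda>(i,j). f N i * g N j)) \<le> 1"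
    by (rule vec_space.rank_le_1_product_entries[where f="f N" and g="g N" and nc=n]) auto
  have "vec_space.rank n (mat n n (\<lambda>(i,j). \<Sum>\<alpha><Suc N. f \<alpha> i * g \<alpha> j)) \<le>
     vec_space.rank n (mat n n (\<lambda>(i,j). \<Sum>\<alpha><N. f \<alpha> i * g \<alpha> j)) + vec_space.rank n (mat n n (\<lambda>(i,j). f N i * g N j))"
    unfolding e by (rule vec_space.rank_subadditive) auto
  then show ?case using Suc r1 by linarith
qed


definition Kv :: "(nat \<Rightarrow> nat \<Rightarrow> complex) \<Rightarrow> nat \<Rightarrow> nat \<Rightarrow> complex" where
  "Kv k i l = (\<Sum>r\<in>{1..<i}. k r l)"

lemma qsq_Kv: "1 \<le> i \<Longrightarrow> i \<le> j \<Longrightarrow> qsq D k i j = sqC D (\<lambda>l. Kv k j l - Kv k i l)"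
proof -
  assume h: "1 \<le> i" "i \<le> j"
  have "\<And>l. Kv k j l = Kv k i l + (\<Sum>r\<in>{i..<j}. k r l)"
    unfolding Kv_def using h by (metis sum.atLeastLessThan_concat)
  then show ?thesis unfolding qsq_def by simp
qed

lemma rsq_Kv: "rsq D p k j = sqC D p + 2 * (\<Sum>l<D. p l * Kv k j l) + sqC D (Kv k j)"
  unfolding rsq_def sqC_def Kv_def[symmetric]
  by (simp add: sum.distrib sum_distrib_left algebra_simps)

lemma pairs_Suc: "{(i,j). 1 \<le> i \<and> i < j \<and> j \<le> Suc a} =
   {(i,j). 1 \<le> i \<and> i < j \<and> j \<le> a} \<union> (\<lambda>i. (i, Suc a)) ` {1..a}"
  by auto

lemma pairs_fin: "finite {(i,j). 1 \<le> i \<and> i < j \<and> j \<le> (a::nat)}"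
  by (rule finite_subset[of _ "{1..a} \<times> {1..a}"]) auto

lemma pair_identity:
  "(\<Sum>(i,j)\<in>{(i,j). 1 \<le> i \<and> i < j \<and> j \<le> a}. sqC D (\<lambda>l. Kv k j l - Kv k i l) * y i * y j)
   = (\<Sum>i\<in>{1..a}. sqC D (Kv k i) * y i) * (\<Sum>i\<in>{1..a}. y i)
     - (\<Sum>l<D. (\<Sum>i\<in>{1..a}. Kv k i l * y i) * (\<Sum>i\<in>{1..a}. Kv k i l * y i))"
proof (induction a)
  case 0
  have e: "{(i,j). 1 \<le> i \<and> i < j \<and> j \<le> (0::nat)} = {}" by auto
  show ?case unfolding e by simp
next
  case (Suc a)
  define K' where "K' = Kv k (Suc a)"
  define y' where "y' = y (Suc a)"
  have disj: "{(i,j). 1 \<le> i \<and> i < j \<and> j \<le> a} \<inter> (\<lambda>i. (i, Suc a)) ` {1..a} = {}" by auto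
  have "(\<Sum>(i,j)\<in>{(i,j). 1 \<le> i \<and> i < j \<and> j \<le> Suc a}. sqC D (\<lambda>l. Kv k j l - Kv k i l) * y i * y j)
    = (\<Sum>(i,j)\<in>{(i,j). 1 \<le> i \<and> i < j \<and> j \<le> a}. sqC D (\<lambda>l. Kv k j l - Kv k i l) * y i * y j)
      + (\<Sum>i\<in>{1..a}. sqC D (\<lambda>l. K' l - Kv k i l) * y i * y')"
    unfolding pairs_Suc
    by (subst sum.union_disjoint[OF pairs_fin _ disj]) (auto simp: sum.reindex inj_on_def K'_def y'_def)
  also have "(\<Sum>i\<in>{1..a}. sqC D (\<lambda>l. K' l - Kv k i l) * y i * y') =
     y' * (sqC D K' * (\<Sum>i\<in>{1..a}. y i) - 2 * (\<Sum>l<D. K' l * (\<Sum>i\<in>{1..a}. Kv k i l * y i))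
       + (\<Sum>i\<in>{1..a}. sqC D (Kv k i) * y i))"
    unfolding sqC_def
    by (simp add: sum_distrib_left sum_distrib_right sum_subtractf sum.distrib algebra_simps
        sum.swap[of _ "{Suc 0..a}" "{..<D}"])
  finally have L: "(\<Sum>(i,j)\<in>{(i,j). 1 \<le> i \<and> i < j \<and> j \<le> Suc a}. sqC D (\<lambda>l. Kv k j l - Kv k i l) * y i * y j)
     = (\<Sum>(i,j)\<in>{(i,j). 1 \<le> i \<and> i < j \<and> j \<le> a}. sqC D (\<lambda>l. Kv k j l - Kv k i l) * y i * y j) + 
      y' * (sqC D K' * (\<Sum>i\<in>{1..a}. y i) - 2 * (\<Sum>l<D. K' l * (\<Sum>i\<in>{1..a}. Kv k i l * y i))
       + (\<Sum>i\<in>{1..a}. sqC D (Kv k i) * y i))" .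
  define S where "S = (\<Sum>i\<in>{1..a}. y i)"
  define A where "A = (\<Sum>i\<in>{1..a}. sqC D (Kv k i) * y i)"
  define B where "B l = (\<Sum>i\<in>{1..a}. Kv k i l * y i)" for l
  have s1: "(\<Sum>i\<in>{1..Suc a}. y i) = S + y'" unfolding S_def y'_def by simp
  have s2: "(\<Sum>i\<in>{1..Suc a}. sqC D (Kv k i) * y i) = A + sqC D K' * y'" unfolding A_def y'_def K'_def by simp
  have s3: "\<And>l. (\<Sum>i\<in>{1..Suc a}. Kv k i l * y i) = B l + K' l * y'" unfolding B_def y'_def K'_def by simp
  have K2: "sqC D K' = (\<Sum>l<D. K' l * K' l)" unfolding sqC_def ..
  show ?case
    unfolding L s1 s2 s3 Suc.IH
    unfolding S_def[symmetric] A_def[symmetric] B_def[symmetric] K2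
    by (simp add: sum_distrib_left sum_distrib_right sum_subtractf sum.distrib algebra_simps)
qed

definition Yc :: "nat \<Rightarrow> (nat \<Rightarrow> real) \<Rightarrow> (nat \<Rightarrow> nat \<Rightarrow> complex) \<Rightarrow> nat \<Rightarrow> nat \<Rightarrow> complex" where
  "Yc D msq k \<beta> i = (if \<beta> = 0 then 1 else if \<beta> = 1 then 0 else if \<beta> = 2 then complex_of_real (msq i)
     else if \<beta> = 3 then sqC D (Kv k i) else Kv k i (\<beta> - 4))"

definition Wc :: "nat \<Rightarrow> complex" where "Wc \<beta> = (if \<beta> = 1 then 1 else 0)"

definition ell :: "nat \<Rightarrow> nat \<Rightarrow> (nat \<Rightarrow> real) \<Rightarrow> (nat \<Rightarrow> nat \<Rightarrow> complex) \<Rightarrow> nat \<Rightarrow> (nat \<Rightarrow> complex) \<Rightarrow> complex \<Rightarrow> complex" where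
  "ell a D msq k \<beta> y w = (\<Sum>i\<in>{1..a}. Yc D msq k \<beta> i * y i) + Wc \<beta> * w"

definition Cm :: "nat \<Rightarrow> nat \<Rightarrow> (nat \<Rightarrow> real) \<Rightarrow> (nat \<Rightarrow> complex) \<Rightarrow> complex \<Rightarrow> complex \<Rightarrow> nat \<Rightarrow> nat \<Rightarrow> complex" where
  "Cm a D msq p x z \<alpha> \<beta> = (let s = z + x; P = z * x;
      c = complex_of_real (msq (a+1)) * x + complex_of_real (msq (a+2)) * z in
    if \<alpha> = 0 then (if \<beta> = 1 then s * c - P * sqC D p else if \<beta> = 2 then s else if \<beta> = 3 then - s else 0)
    else if \<alpha> = 1 then (if \<beta> = 1 then P * c else if \<beta> = 2 then P else if \<beta> = 3 then - P
       else if \<beta> \<ge> 4 then - 2 * P * p (\<beta> - 4) else 0)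
    else if \<alpha> \<ge> 4 then (if \<beta> = \<alpha> then s else 0) else 0)"

lemma split4: "(\<Sum>\<beta><(D::nat)+4. f \<beta>) = f 0 + f 1 + f 2 + f 3 + (\<Sum>l<D. f (l+4))"
  by (induction D) (simp_all add: numeral_eq_Suc add_ac)

lemma sum_if_delta: "(l::nat) < D \<Longrightarrow> (\<Sum>la<D. (if la = l then s else 0) * B la) = s * (B l :: complex)"
proof -
  assume "l < D"
  have "(\<Sum>la<D. (if la = l then s else 0) * B la) = (\<Sum>la<D. if la = l then s * B l else 0)"
    by (rule sum.cong) auto
  then show ?thesis using \<open>l < D\<close> by simp
qed

lemma main_identity:
  "Ftilde a D msq p k y x z w =
    (\<Sum>\<alpha><D+4. ell a D msq k \<alpha> y w * (\<Sum>\<beta><D+4. Cm a D msq p x z \<alpha> \<beta> * ell a D msq k \<beta> y w))"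
proof -
  define s where "s = z + x"
  define P where "P = z * x"
  define c where "c = complex_of_real (msq (a+1)) * x + complex_of_real (msq (a+2)) * z"
  define S where "S = (\<Sum>i\<in>{1..a}. y i)"
  define M where "M = (\<Sum>i\<in>{1..a}. complex_of_real (msq i) * y i)"
  define A where "A = (\<Sum>i\<in>{1..a}. sqC D (Kv k i) * y i)"
  define B where "B l = (\<Sum>i\<in>{1..a}. Kv k i l * y i)" for l
  define ell' where "ell' \<beta> = ell a D msq k \<beta> y w" for \<beta>
  have e0: "ell' 0 = S" and e1: "ell' 1 = w" and e2: "ell' 2 = M" and e3: "ell' 3 = A"
    and e4: "\<And>l. ell' (l+4) = B l"
    unfolding ell'_def ell_def Yc_def Wc_def S_def M_def A_def B_def by simp_all
  have C: "Cm a D msq p x z \<alpha> \<beta> = (if \<alpha> = 0 then (if \<beta> = 1 then s * c - P * sqC D p else if \<beta> = 2 then s else if \<beta> = 3 then - s else 0)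
    else if \<alpha> = 1 then (if \<beta> = 1 then P * c else if \<beta> = 2 then P else if \<beta> = 3 then - P
       else if \<beta> \<ge> 4 then - 2 * P * p (\<beta> - 4) else 0)
    else if \<alpha> \<ge> 4 then (if \<beta> = \<alpha> then s else 0) else 0)" for \<alpha> \<beta>
    unfolding Cm_def s_def P_def c_def Let_def by simp
  have h0: "(\<Sum>\<beta><D+4. Cm a D msq p x z 0 \<beta> * ell' \<beta>) = (s * c - P * sqC D p) * w + s * M - s * A"
    unfolding split4 C e0 e1 e2 e3 e4 by simp
  have h1: "(\<Sum>\<beta><D+4. Cm a D msq p x z 1 \<beta> * ell' \<beta>) = P * c * w + P * M - P * A - 2 * P * (\<Sum>l<D. p l * B l)"
    unfolding split4 C e0 e1 e2 e3 e4 by (simp add: sum_distrib_left sum_negf algebra_simps)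
  have h2: "(\<Sum>\<beta><D+4. Cm a D msq p x z 2 \<beta> * ell' \<beta>) = 0"
    unfolding split4 C by simp
  have h3: "(\<Sum>\<beta><D+4. Cm a D msq p x z 3 \<beta> * ell' \<beta>) = 0"
    unfolding split4 C by simp
  have h4: "(\<Sum>\<beta><D+4. Cm a D msq p x z (l+4) \<beta> * ell' \<beta>) = s * B l" if "l < D" for l
    unfolding split4 C e0 e1 e2 e3 e4 using that by (simp add: sum_if_delta)
  define hh where "hh \<alpha> = (\<Sum>\<beta><D+4. Cm a D msq p x z \<alpha> \<beta> * ell' \<beta>)" for \<alpha>
  have RHS: "(\<Sum>\<alpha><D+4. ell' \<alpha> * (\<Sum>\<beta><D+4. Cm a D msq p x z \<alpha> \<beta> * ell' \<beta>)) =
     S * ((s * c - P * sqC D p) * w + s * M - s * A) + w * (P * c * w + P * M - P * A - 2 * P * (\<Sum>l<D. p l * B l))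
     + (\<Sum>l<D. B l * (s * B l))"
  proof -
    have "(\<Sum>\<alpha><D+4. ell' \<alpha> * (\<Sum>\<beta><D+4. Cm a D msq p x z \<alpha> \<beta> * ell' \<beta>)) = (\<Sum>\<alpha><D+4. ell' \<alpha> * hh \<alpha>)"
      unfolding hh_def ..
    also have "\<dots> = ell' 0 * hh 0 + ell' 1 * hh 1 + ell' 2 * hh 2 + ell' 3 * hh 3 + (\<Sum>l<D. ell' (l+4) * hh (l+4))"
      by (rule split4)
    also have "(\<Sum>l<D. ell' (l+4) * hh (l+4)) = (\<Sum>l<D. B l * (s * B l))"
      by (rule sum.cong) (auto simp: e4 hh_def h4)
    finally show ?thesis unfolding hh_def h0 h1 h2 h3 e0 e1 e2 e3 by simp
  qed
  have V1: "(\<Sum>(i,j)\<in>{(i,j). 1 \<le> i \<and> i < j \<and> j \<le> a}. qsq D k i j * y i * y j) = A * S - (\<Sum>l<D. B l * B l)"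
  proof -
    have "(\<Sum>(i,j)\<in>{(i,j). 1 \<le> i \<and> i < j \<and> j \<le> a}. qsq D k i j * y i * y j) =
      (\<Sum>(i,j)\<in>{(i,j). 1 \<le> i \<and> i < j \<and> j \<le> a}. sqC D (\<lambda>l. Kv k j l - Kv k i l) * y i * y j)"
      by (rule sum.cong) (auto simp: qsq_Kv)
    then show ?thesis using pair_identity unfolding A_def S_def B_def by simp
  qed
  have V2: "(\<Sum>j\<in>{1..a}. rsq D p k j * y j) = sqC D p * S + 2 * (\<Sum>l<D. p l * B l) + A"
    unfolding rsq_Kv S_def A_def B_def
    by (simp add: sum.distrib sum_distrib_left sum_distrib_right algebra_simps sum.swap[of _ "{Suc 0..a}" "{..<D}"])
  have LHS: "Ftilde a D msq p k y x z w = (s * S + P * w) * (M + c * w) - (s * (A * S - (\<Sum>l<D. B l * B l))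
     + P * w * (sqC D p * S + 2 * (\<Sum>l<D. p l * B l) + A))"
    unfolding Ftilde_def Let_def V1 V2 s_def[symmetric] P_def[symmetric] S_def[symmetric] M_def[symmetric]
    by (simp add: c_def algebra_simps P_def)
  show ?thesis
    unfolding ell'_def[symmetric] RHS LHS
    by (simp add: sum_distrib_left sum_subtractf algebra_simps)
qed

lemma polar:
  fixes C :: "nat \<Rightarrow> nat \<Rightarrow> complex"
  shows "((\<Sum>\<alpha><N. (u \<alpha> + v \<alpha>) * (\<Sum>\<beta><N. C \<alpha> \<beta> * (u \<beta> + v \<beta>)))
        - (\<Sum>\<alpha><N. u \<alpha> * (\<Sum>\<beta><N. C \<alpha> \<beta> * u \<beta>))
        - (\<Sum>\<alpha><N. v \<alpha> * (\<Sum>\<beta><N. C \<alpha> \<beta> * v \<beta>))) / 2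
       = (\<Sum>\<alpha><N. u \<alpha> * ((\<Sum>\<beta><N. (C \<alpha> \<beta> + C \<beta> \<alpha>) * v \<beta>) / 2))"
proof -
  have sw: "(\<Sum>\<alpha><N. \<Sum>\<beta><N. v \<alpha> * C \<alpha> \<beta> * u \<beta>) = (\<Sum>\<alpha><N. \<Sum>\<beta><N. u \<alpha> * C \<beta> \<alpha> * v \<beta>)"
    by (subst sum.swap) (simp add: mult_ac)
  have "(\<Sum>\<alpha><N. (u \<alpha> + v \<alpha>) * (\<Sum>\<beta><N. C \<alpha> \<beta> * (u \<beta> + v \<beta>)))
        - (\<Sum>\<alpha><N. u \<alpha> * (\<Sum>\<beta><N. C \<alpha> \<beta> * u \<beta>))
        - (\<Sum>\<alpha><N. v \<alpha> * (\<Sum>\<beta><N. C \<alpha> \<beta> * v \<beta>))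
      = (\<Sum>\<alpha><N. \<Sum>\<beta><N. u \<alpha> * C \<alpha> \<beta> * v \<beta>) + (\<Sum>\<alpha><N. \<Sum>\<beta><N. v \<alpha> * C \<alpha> \<beta> * u \<beta>)"
    by (simp add: sum_distrib_left sum.distrib sum_subtractf algebra_simps)
  also have "\<dots> = (\<Sum>\<alpha><N. u \<alpha> * (\<Sum>\<beta><N. (C \<alpha> \<beta> + C \<beta> \<alpha>) * v \<beta>))"
    unfolding sw by (simp add: sum_distrib_left sum.distrib algebra_simps)
  finally show ?thesis by (simp add: sum_divide_distrib[symmetric])
qed

lemma ell_add: "ell a D msq k \<alpha> (\<lambda>i. y1 i + y2 i) (w1 + w2) = ell a D msq k \<alpha> y1 w1 + ell a D msq k \<alpha> y2 w2"
  unfolding ell_def by (simp add: sum.distrib algebra_simps)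

definition Lc where "Lc a D msq k \<alpha> t = ell a D msq k \<alpha> (\<lambda>i. unitv t (i - 1)) (unitv t a)"

definition gc where "gc a D msq p k x z \<alpha> j =
   (\<Sum>\<beta><D+4. (Cm a D msq p x z \<alpha> \<beta> + Cm a D msq p x z \<beta> \<alpha>) * Lc a D msq k \<beta> j) / 2"

lemma fibre_mat_eq: "fibre_mat a D msq p k x z =
   mat (a+1) (a+1) (\<lambda>(i,j). \<Sum>\<alpha><D+4. Lc a D msq k \<alpha> i * gc a D msq p k x z \<alpha> j)"
proof (rule eq_matI)
  fix i j assume "i < dim_row (mat (a+1) (a+1) (\<lambda>(i,j). \<Sum>\<alpha><D+4. Lc a D msq k \<alpha> i * gc a D msq p k x z \<alpha> j))"
     "j < dim_col (mat (a+1) (a+1) (\<lambda>(i,j). \<Sum>\<alpha><D+4. Lc a D msq k \<alpha> i * gc a D msq p k x z \<alpha> j))"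
  then have ij: "i < a+1" "j < a+1" by auto
  have Q: "fibre_form a D msq p k x z v = (\<Sum>\<alpha><D+4. ell a D msq k \<alpha> (\<lambda>i. v (i - 1)) (v a) *
      (\<Sum>\<beta><D+4. Cm a D msq p x z \<alpha> \<beta> * ell a D msq k \<beta> (\<lambda>i. v (i - 1)) (v a)))" for v
    unfolding fibre_form_def main_identity ..
  have "fibre_mat a D msq p k x z $$ (i,j) = (fibre_form a D msq p k x z (\<lambda>t. unitv i t + unitv j t)
        - fibre_form a D msq p k x z (unitv i) - fibre_form a D msq p k x z (unitv j)) / 2"
    unfolding fibre_mat_def using ij by simp
  also have "\<dots> = (\<Sum>\<alpha><D+4. Lc a D msq k \<alpha> i * gc a D msq p k x z \<alpha> j)"
    unfolding Q ell_add Lc_def[symmetric] gc_def by (rule polar)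
  finally show "fibre_mat a D msq p k x z $$ (i,j) =
     mat (a+1) (a+1) (\<lambda>(i,j). \<Sum>\<alpha><D+4. Lc a D msq k \<alpha> i * gc a D msq p k x z \<alpha> j) $$ (i,j)"
    using ij by simp
qed (auto simp: fibre_mat_def)


theorem proposition7p3:
  fixes a D :: nat and msq :: "nat \<Rightarrow> real"
    and p :: "nat \<Rightarrow> complex" and k :: "nat \<Rightarrow> nat \<Rightarrow> complex"
  assumes "a \<ge> 1" and "D \<ge> 1"
    and "\<And>i. 1 \<le> i \<Longrightarrow> i \<le> a + 2 \<Longrightarrow> msq i > 0"
    and "int D < int a - 3"
  shows "generic_corank a D msq p k \<ge> 1"
proof -
  have cor: "fibre_corank a D msq p k x z \<ge> 1" for x z
  proof -
    have "vec_space.rank (a+1) (fibre_mat a D msq p k x z) \<le> D + 4"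
      unfolding fibre_mat_eq by (rule rank_sum_rank1)
    then show ?thesis unfolding fibre_corank_def using assms(4) by linarith
  qed
  have ex: "\<exists>c. \<exists>x z. (x, z) \<noteq> (0, 0) \<and> fibre_corank a D msq p k x z = c"
    by (rule exI[of _ "fibre_corank a D msq p k 1 0"]) (rule exI[of _ 1], rule exI[of _ 0], simp)
  from LeastI_ex[OF ex] obtain x z where
    "fibre_corank a D msq p k x z = (LEAST c. \<exists>x z. (x, z) \<noteq> (0, 0) \<and> fibre_corank a D msq p k x z = c)"
    by blast
  then show ?thesis unfolding generic_corank_def using cor[of x z] by simp
qed

end
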